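(* Let $\mathbf S=\operatorname{diag}(\lambda_i)_{i=1}^d$, $\mathbf M=\operatorname{diag}(m_i)_{i=1}^d$ with $\lambda_i,m_i>0$, $\mathbf R=\operatorname{diag}(r_i)_{i=1}^d$ with $r_i\ge0$, $\sigma>0$, $n\ge1$, and set $\mathbf R'=\mathbf M^{-1/2}\mathbf R\mathbf M^{-1/2}$, $\mathbf S'=\mathbf M^{-1/2}\mathbf S\mathbf M^{-1/2}$. For $\tau\ge0$ let $\mathbb K_\tau=\{k\in[d]:r_k/m_k>\tau^2\}$. Then $$\inf_{\mathbf A\in\mathbb R^{d\times d}}\frac1{\pi^2}\|(\mathbf I-\mathbf A)^\top\mathbf R'(\mathbf I-\mathbf A)\|+\frac{\sigma^2}{n}\langle\mathbf R',\mathbf A(\mathbf S')^{-1}\mathbf A^\top\rangle=\inf_{\tau\ge0}\Big[\frac{\tau^2}{\pi^2}+\sum_{i\in\mathbb K_\tau}\Big(1-\tau\sqrt{\tfrac{m_i}{r_i}}\Big)^2\frac{\sigma^2r_i}{n\lambda_i}\Big]\ \ge\ \frac14\inf_{\tau\ge0}\Big[\frac{\tau^2}{\pi^2}+\sum_{i\in\mathbb K_\tau}\frac{\sigma^2r_i}{n\lambda_i}\Big].$$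
   Context: $\|\cdot\|$ is the spectral norm and $\langle\mathbf A,\mathbf B\rangle=\operatorname{tr}(\mathbf A^\top\mathbf B)$; $[d]=\{1,\dots,d\}$. *)

theory Defs
  imports "HOL-Analysis.Analysis"
begin

definition diag_mat :: "('n::finite \<Rightarrow> real) \<Rightarrow> real^'n^'n" where
  "diag_mat f = (\<chi> i j. if i = j then f i else 0)"

definition spec_norm :: "real^'n::finite^'m::finite \<Rightarrow> real" where
  "spec_norm A = onorm (\<lambda>x. A *v x)"

definition frob_inner :: "real^'n::finite^'n \<Rightarrow> real^'n^'n \<Rightarrow> real" where
  "frob_inner A B = trace (transpose A ** B)"

end

theory Submission imports Defs begin

lemma diag_comp: "diag_mat f $ i $ j = (if i = j then f i else 0)"
  by (simp add: diag_mat_def)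

lemma diag_mult_left: "(diag_mat f ** X) $ i $ j = f i * X $ i $ j"
proof -
  have "(\<Sum>k\<in>UNIV. (if i = k then f i else 0) * X $ k $ j) = (\<Sum>k\<in>UNIV. if k = i then f i * X $ i $ j else 0)"
    by (rule sum.cong) auto
  then show ?thesis by (simp add: diag_mat_def matrix_matrix_mult_def)
qed

lemma diag_mult_right: "(X ** diag_mat f) $ i $ j = X $ i $ j * f j"
proof -
  have "(\<Sum>k\<in>UNIV. X $ i $ k * (if k = j then f k else 0)) = (\<Sum>k\<in>UNIV. if k = j then X $ i $ j * f j else 0)"
    by (rule sum.cong) auto
  then show ?thesis by (simp add: diag_mat_def matrix_matrix_mult_def)
qed

lemma diag_diag: "diag_mat f ** diag_mat g = diag_mat (\<lambda>i. f i * g i)"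
  by (simp add: vec_eq_iff diag_mult_left diag_comp)

lemma diag_transpose: "transpose (diag_mat f) = diag_mat f"
  by (simp add: vec_eq_iff transpose_def diag_comp)

lemma mat1_minus_diag: "mat 1 - diag_mat f = diag_mat (\<lambda>i. 1 - f i)"
  by (simp add: vec_eq_iff mat_def diag_comp)

lemma diag_mv: "diag_mat f *v x = (\<chi> i. f i * x $ i)"
proof -
  have "\<And>i. (\<Sum>j\<in>UNIV. (if i = j then f i else 0) * x $ j) = (\<Sum>j\<in>UNIV. if j = i then f i * x $ i else 0)"
    by (rule sum.cong) auto
  then show ?thesis by (simp add: vec_eq_iff matrix_vector_mult_def diag_mat_def)
qed

lemma matrix_inv_diag:
  assumes "\<And>i. f i \<noteq> (0::real)"
  shows "matrix_inv (diag_mat f) = diag_mat (\<lambda>i. 1 / f i)"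
proof -
  let ?D = "diag_mat (\<lambda>i. 1 / f i)"
  have h1: "diag_mat f ** ?D = mat 1" "?D ** diag_mat f = mat 1"
    using assms by (simp_all add: diag_diag vec_eq_iff diag_comp mat_def)
  let ?P = "\<lambda>A'. diag_mat f ** A' = mat 1 \<and> A' ** diag_mat f = mat 1"
  have "?P (SOME A'. ?P A')" using someI[of ?P ?D] h1 by blast
  then have e: "diag_mat f ** (SOME A'. ?P A') = mat 1" by blast
  have "(SOME A'. ?P A') = mat 1 ** (SOME A'. ?P A')" by simp
  also have "\<dots> = (?D ** diag_mat f) ** (SOME A'. ?P A')" using h1 by simp
  also have "\<dots> = ?D ** (diag_mat f ** (SOME A'. ?P A'))" by (simp add: matrix_mul_assoc)
  also have "\<dots> = ?D" using e by simp
  finally have "(SOME A'. ?P A') = ?D" .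
  then show ?thesis unfolding matrix_inv_def by simp
qed

lemma spec_norm_diag:
  assumes "\<And>i. \<bar>f i\<bar> \<le> b"
  shows "spec_norm (diag_mat f) \<le> b"
  unfolding spec_norm_def
proof (rule onorm_le)
  fix x :: "real^'a"
  have "b \<ge> 0" using assms[of undefined] by simp
  have "norm (diag_mat f *v x) \<le> norm (b *s x)"
    by (rule norm_le_componentwise_cart) (simp add: diag_mv abs_mult mult_right_mono assms \<open>b\<ge>0\<close>)
  also have "\<dots> = b * norm x" using \<open>b\<ge>0\<close> by (simp add: norm_scaleR[symmetric] scalar_mult_eq_scaleR)
  finally show "norm (diag_mat f *v x) \<le> b * norm x" .
qed

lemma diag_le_spec_norm: "B $ i $ i \<le> spec_norm (B::real^'n^'n)"
proof -
  have "(\<Sum>j\<in>UNIV. B $ i $ j * (if j = i then 1 else 0)) = (\<Sum>j\<in>UNIV. if j = i then B $ i $ i else 0)"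
    by (rule sum.cong) auto
  then have "B $ i $ i = (B *v axis i 1) $ i"
    by (simp add: matrix_vector_mult_def axis_def)
  also have "\<dots> \<le> norm (B *v axis i 1)" using component_le_norm_cart by (metis abs_le_D1)
  also have "\<dots> \<le> spec_norm B * norm (axis i (1::real))"
    unfolding spec_norm_def by (rule onorm[OF matrix_vector_mul_bounded_linear])
  finally show ?thesis by simp
qed

theorem mainTheorem6:
  fixes lam m r :: "'d::finite \<Rightarrow> real" and \<sigma> :: real and n :: nat
  assumes lam_pos: "\<And>i. lam i > 0"
    and m_pos: "\<And>i. m i > 0"
    and r_nonneg: "\<And>i. r i \<ge> 0"
    and sigma_pos: "\<sigma> > 0"
    and n_pos: "n \<ge> 1"
  defines "R' \<equiv> diag_mat (\<lambda>i. 1 / sqrt (m i)) ** diag_mat r ** diag_mat (\<lambda>i. 1 / sqrt (m i))"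
    and "S' \<equiv> diag_mat (\<lambda>i. 1 / sqrt (m i)) ** diag_mat lam ** diag_mat (\<lambda>i. 1 / sqrt (m i))"
    and "K \<equiv> (\<lambda>\<tau>::real. {k. r k / m k > \<tau>\<^sup>2})"
  shows "(INF A :: real^'d^'d.
            1 / pi\<^sup>2 * spec_norm (transpose (mat 1 - A) ** R' ** (mat 1 - A))
            + \<sigma>\<^sup>2 / real n * frob_inner R' (A ** matrix_inv S' ** transpose A))
         = (INF \<tau>\<in>{0::real..}. \<tau>\<^sup>2 / pi\<^sup>2
              + (\<Sum>i\<in>K \<tau>. (1 - \<tau> * sqrt (m i / r i))\<^sup>2 * (\<sigma>\<^sup>2 * r i / (real n * lam i))))
       \<and> (INF \<tau>\<in>{0::real..}. \<tau>\<^sup>2 / pi\<^sup>2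
              + (\<Sum>i\<in>K \<tau>. (1 - \<tau> * sqrt (m i / r i))\<^sup>2 * (\<sigma>\<^sup>2 * r i / (real n * lam i))))
         \<ge> 1 / 4 * (INF \<tau>\<in>{0::real..}. \<tau>\<^sup>2 / pi\<^sup>2
              + (\<Sum>i\<in>K \<tau>. \<sigma>\<^sup>2 * r i / (real n * lam i)))"
  proof -
  define \<rho> where "\<rho> = (\<lambda>i. r i / m i)"
  define \<mu> where "\<mu> = (\<lambda>i. m i / lam i)"
  define c where "c = \<sigma>\<^sup>2 / real n"
  have c_pos: "c > 0" using sigma_pos n_pos by (simp add: c_def)
  have rho_nn: "\<rho> i \<ge> 0" for i using r_nonneg[of i] m_pos[of i] by (simp add: \<rho>_def)
  have mu_pos: "\<mu> i > 0" for i using lam_pos[of i] m_pos[of i] by (simp add: \<mu>_def)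
  have sq: "1 / sqrt (m i) * x * (1 / sqrt (m i)) = x / m i" for i x
  proof -
    have "sqrt (m i) * sqrt (m i) = m i" using m_pos[of i] by simp
    then show ?thesis by (simp add: field_simps)
  qed
  have R'eq: "R' = diag_mat \<rho>"
    unfolding R'_def diag_diag \<rho>_def sq ..
  have S'eq: "S' = diag_mat (\<lambda>i. lam i / m i)"
    unfolding S'_def diag_diag sq ..
  have Sinv: "matrix_inv S' = diag_mat \<mu>"
  proof -
    have "matrix_inv S' = diag_mat (\<lambda>i. 1 / (lam i / m i))"
      unfolding S'eq by (rule matrix_inv_diag) (use lam_pos m_pos in \<open>simp add: less_imp_neq[symmetric]\<close>)
    then show ?thesis by (simp add: \<mu>_def)
  qed
  have coef: "\<sigma>\<^sup>2 * r i / (real n * lam i) = c * \<rho> i * \<mu> i" for i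
    using m_pos[of i] lam_pos[of i] n_pos by (simp add: c_def \<rho>_def \<mu>_def field_simps)
  define V where "V = (\<lambda>A::real^'d^'d. 1 / pi\<^sup>2 * spec_norm (transpose (mat 1 - A) ** diag_mat \<rho> ** (mat 1 - A))
            + \<sigma>\<^sup>2 / real n * frob_inner (diag_mat \<rho>) (A ** diag_mat \<mu> ** transpose A))"
  define F where "F = (\<lambda>\<tau>. \<tau>\<^sup>2 / pi\<^sup>2
              + (\<Sum>i\<in>K \<tau>. (1 - \<tau> * sqrt (m i / r i))\<^sup>2 * (\<sigma>\<^sup>2 * r i / (real n * lam i))))"
  define G where "G = (\<lambda>\<tau>. \<tau>\<^sup>2 / pi\<^sup>2
              + (\<Sum>i\<in>K \<tau>. \<sigma>\<^sup>2 * r i / (real n * lam i)))"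
  have frob_eq: "frob_inner (diag_mat \<rho>) (A ** diag_mat \<mu> ** transpose A)
      = (\<Sum>i\<in>UNIV. \<rho> i * (\<Sum>j\<in>UNIV. (A $ i $ j)\<^sup>2 * \<mu> j))" for A :: "real^'d^'d"
  proof -
    have e: "(A ** diag_mat \<mu> ** transpose A) $ i $ i = (\<Sum>j\<in>UNIV. (A $ i $ j)\<^sup>2 * \<mu> j)" for i
      by (simp add: matrix_matrix_mult_def[of "A ** diag_mat \<mu>"] diag_mult_right transpose_def
        power2_eq_square mult_ac)
    show ?thesis unfolding frob_inner_def trace_def diag_transpose diag_mult_left e ..
  qed
  have B_eq: "(transpose C ** diag_mat \<rho> ** C) $ i $ i = (\<Sum>k\<in>UNIV. \<rho> k * (C $ k $ i)\<^sup>2)"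
    for C :: "real^'d^'d" and i
    unfolding matrix_matrix_mult_def[of "transpose C ** diag_mat \<rho>"]
    by (simp add: diag_mult_right transpose_def power2_eq_square mult_ac)
  have cm_nn: "0 \<le> c * \<rho> i * \<mu> i" for i
    using c_pos rho_nn[of i] mu_pos[of i] by simp
  have c_nn: "c \<ge> 0" using c_pos by simp
  have mu_nn: "\<mu> i \<ge> 0" for i using mu_pos[of i] by simp
  have F_nn: "F \<tau> \<ge> 0" for \<tau>
    unfolding F_def coef using cm_nn
    by (intro add_nonneg_nonneg sum_nonneg mult_nonneg_nonneg) (auto simp: c_nn rho_nn mu_nn)
  have G_nn: "G \<tau> \<ge> 0" for \<tau>
    unfolding G_def coef using cm_nn
    by (intro add_nonneg_nonneg sum_nonneg) (auto simp: c_nn rho_nn mu_nn)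
  have lower: "\<exists>\<tau>\<ge>0. F \<tau> \<le> V A" for A :: "real^'d^'d"
  proof -
    define C where "C = mat 1 - A"
    define N where "N = spec_norm (transpose C ** diag_mat \<rho> ** C)"
    define \<tau> where "\<tau> = sqrt N"
    have N_nn: "N \<ge> 0" unfolding N_def spec_norm_def
      by (rule onorm_pos_le[OF matrix_vector_mul_bounded_linear])
    have tau2: "\<tau>\<^sup>2 = N" using N_nn by (simp add: \<tau>_def)
    have Cii: "C $ i $ i = 1 - A $ i $ i" for i by (simp add: C_def mat_def)
    have diagN: "\<rho> i * (1 - A $ i $ i)\<^sup>2 \<le> N" for i
    proof -
      have "\<rho> i * (C $ i $ i)\<^sup>2 \<le> (\<Sum>k\<in>UNIV. \<rho> k * (C $ k $ i)\<^sup>2)"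
        by (rule member_le_sum) (auto simp: rho_nn)
      also have "\<dots> \<le> N" unfolding N_def B_eq[symmetric] by (rule diag_le_spec_norm)
      finally show ?thesis by (simp add: Cii)
    qed
    have frob_ge: "(\<Sum>i\<in>UNIV. \<rho> i * \<mu> i * (A $ i $ i)\<^sup>2)
        \<le> frob_inner (diag_mat \<rho>) (A ** diag_mat \<mu> ** transpose A)"
      unfolding frob_eq
    proof (rule sum_mono)
      fix i
      have "(A $ i $ i)\<^sup>2 * \<mu> i \<le> (\<Sum>j\<in>UNIV. (A $ i $ j)\<^sup>2 * \<mu> j)"
        by (rule member_le_sum) (auto simp: mu_nn)
      from mult_left_mono[OF this rho_nn[of i]]
      show "\<rho> i * \<mu> i * (A $ i $ i)\<^sup>2 \<le> \<rho> i * (\<Sum>j\<in>UNIV. (A $ i $ j)\<^sup>2 * \<mu> j)"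
        by (simp add: mult_ac)
    qed
    have termb: "(1 - \<tau> * sqrt (m i / r i))\<^sup>2 * (\<sigma>\<^sup>2 * r i / (real n * lam i))
        \<le> c * (\<rho> i * \<mu> i * (A $ i $ i)\<^sup>2)" if iK: "i \<in> K \<tau>" for i
    proof -
      have rhogt: "\<rho> i > \<tau>\<^sup>2" using iK by (simp add: K_def \<rho>_def)
      have tau_nn: "\<tau> \<ge> 0" by (simp add: \<tau>_def N_nn)
      have "0 < r i / m i" using le_less_trans[OF zero_le_power2 rhogt] by (simp add: \<rho>_def)
      then have rpos: "r i > 0" using m_pos[of i] by (simp add: zero_less_divide_iff)
      define q where "q = \<tau> * sqrt (m i / r i)"
      have q_nn: "q \<ge> 0" using tau_nn rpos m_pos[of i] by (simp add: q_def)
      have q2: "q\<^sup>2 = \<tau>\<^sup>2 / \<rho> i"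
        using rpos m_pos[of i] by (simp add: q_def power_mult_distrib \<rho>_def)
      have rho_pos: "\<rho> i > 0" using le_less_trans[OF zero_le_power2 rhogt] .
      have "q\<^sup>2 < 1" using q2 rhogt rho_pos by simp
      then have "q\<^sup>2 < 1\<^sup>2" by simp
      then have q1: "q \<le> 1" using power_less_imp_less_base[of q 2 1] by simp
      have "(1 - A $ i $ i)\<^sup>2 \<le> q\<^sup>2"
        using diagN[of i] rho_pos unfolding q2 tau2 by (simp add: pos_le_divide_eq mult.commute)
      then have "\<bar>1 - A $ i $ i\<bar> \<le> q" using q_nn power2_le_iff_abs_le by blast
      then have "(1 - q)\<^sup>2 \<le> (A $ i $ i)\<^sup>2" using q1 by (intro power_mono) auto
      then have "(1 - q)\<^sup>2 * (c * \<rho> i * \<mu> i) \<le> (A $ i $ i)\<^sup>2 * (c * \<rho> i * \<mu> i)"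
        using c_pos rho_pos mu_pos[of i] by (intro mult_right_mono) auto
      then show ?thesis unfolding coef q_def[symmetric] by (simp add: mult_ac)
    qed
    have "F \<tau> \<le> N / pi\<^sup>2 + (\<Sum>i\<in>K \<tau>. c * (\<rho> i * \<mu> i * (A $ i $ i)\<^sup>2))"
      unfolding F_def tau2 using termb by (intro add_left_mono sum_mono) auto
    also have "\<dots> \<le> N / pi\<^sup>2 + (\<Sum>i\<in>UNIV. c * (\<rho> i * \<mu> i * (A $ i $ i)\<^sup>2))"
      using cm_nn
      by (intro add_left_mono sum_mono2) (auto simp: c_nn rho_nn mu_nn intro!: mult_nonneg_nonneg)
    also have "\<dots> \<le> V A"
      unfolding V_def N_def[symmetric] C_def[symmetric] c_def[symmetric] sum_distrib_left[symmetric]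
      using frob_ge c_pos by simp
    finally show ?thesis using N_nn unfolding \<tau>_def by (intro exI[of _ "sqrt N"]) simp
  qed
  have upper: "\<exists>A. V A \<le> F \<tau>" if tau_nn: "\<tau> \<ge> 0" for \<tau>
  proof -
    define a where "a = (\<lambda>i. if i \<in> K \<tau> then 1 - \<tau> * sqrt (m i / r i) else 0)"
    have bnd: "\<bar>(1 - a i) * \<rho> i * (1 - a i)\<bar> \<le> \<tau>\<^sup>2" for i
    proof (cases "i \<in> K \<tau>")
      case True
      then have "r i / m i > \<tau>\<^sup>2" by (simp add: K_def)
      then have "0 < r i / m i" using le_less_trans[OF zero_le_power2] by blast
      then have rpos: "r i > 0" using m_pos[of i] by (simp add: zero_less_divide_iff)
      have "(1 - a i) * \<rho> i * (1 - a i) = \<tau>\<^sup>2 * ((sqrt (m i / r i))\<^sup>2 * (r i / m i))"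
        using True by (simp add: a_def \<rho>_def power2_eq_square mult_ac)
      also have "\<dots> = \<tau>\<^sup>2" using rpos m_pos[of i] by simp
      finally show ?thesis by simp
    next
      case False
      then show ?thesis using rho_nn[of i] by (simp add: a_def K_def \<rho>_def)
    qed
    have specb: "spec_norm (transpose (mat 1 - diag_mat a) ** diag_mat \<rho> ** (mat 1 - diag_mat a)) \<le> \<tau>\<^sup>2"
      unfolding mat1_minus_diag diag_transpose diag_diag by (rule spec_norm_diag) (rule bnd)
    have frobd: "frob_inner (diag_mat \<rho>) (diag_mat a ** diag_mat \<mu> ** transpose (diag_mat a))
        = (\<Sum>i\<in>UNIV. \<rho> i * (a i * \<mu> i * a i))"
      by (simp add: frob_inner_def trace_def diag_transpose diag_diag diag_comp)
    have "(\<Sum>i\<in>UNIV. \<rho> i * (a i * \<mu> i * a i))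
        = (\<Sum>i\<in>UNIV. if i \<in> K \<tau> then \<rho> i * (a i * \<mu> i * a i) else 0)"
      by (rule sum.cong) (auto simp: a_def)
    also have "\<dots> = (\<Sum>i\<in>K \<tau>. \<rho> i * (a i * \<mu> i * a i))"
      by (simp add: sum.inter_restrict[symmetric])
    finally have s1: "(\<Sum>i\<in>UNIV. \<rho> i * (a i * \<mu> i * a i)) = (\<Sum>i\<in>K \<tau>. \<rho> i * (a i * \<mu> i * a i))" .
    have s2: "c * (\<Sum>i\<in>K \<tau>. \<rho> i * (a i * \<mu> i * a i))
        = (\<Sum>i\<in>K \<tau>. (1 - \<tau> * sqrt (m i / r i))\<^sup>2 * (\<sigma>\<^sup>2 * r i / (real n * lam i)))"
      unfolding sum_distrib_left coef
      by (rule sum.cong) (simp_all add: a_def power2_eq_square mult_ac)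
    have sumK: "c * (\<Sum>i\<in>UNIV. \<rho> i * (a i * \<mu> i * a i))
        = (\<Sum>i\<in>K \<tau>. (1 - \<tau> * sqrt (m i / r i))\<^sup>2 * (\<sigma>\<^sup>2 * r i / (real n * lam i)))"
      unfolding s1 s2 ..
    have "V (diag_mat a) \<le> \<tau>\<^sup>2 / pi\<^sup>2 + c * (\<Sum>i\<in>UNIV. \<rho> i * (a i * \<mu> i * a i))"
      unfolding V_def frobd c_def[symmetric] using specb
      by (simp add: divide_right_mono)
    also have "\<dots> = F \<tau>" unfolding F_def sumK ..
    finally show ?thesis by blast
  qed
  have V_nn: "0 \<le> V A" for A
  proof -
    obtain \<tau> where "F \<tau> \<le> V A" using lower by blast
    then show ?thesis using F_nn[of \<tau>] by linarith
  qed
  have bddV: "bdd_below (range V)"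
    using V_nn by (intro bdd_belowI[of _ 0]) auto
  have bddF: "bdd_below (F ` {0..})" using F_nn by (intro bdd_belowI[of _ 0]) auto
  have bddG: "bdd_below (G ` {0..})" using G_nn by (intro bdd_belowI[of _ 0]) auto
  have eq1: "(INF A. V A) = (INF \<tau>\<in>{0..}. F \<tau>)"
  proof (rule antisym)
    show "(INF A. V A) \<le> (INF \<tau>\<in>{0..}. F \<tau>)"
    proof (rule cINF_greatest)
      fix \<tau> :: real assume "\<tau> \<in> {0..}"
      then obtain A where "V A \<le> F \<tau>" using upper by auto
      then show "(INF A. V A) \<le> F \<tau>" using cINF_lower[OF bddV, of A] by simp
    qed auto
    show "(INF \<tau>\<in>{0..}. F \<tau>) \<le> (INF A. V A)"
    proof (rule cINF_greatest)
      fix A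
      obtain \<tau> where "\<tau> \<ge> 0" "F \<tau> \<le> V A" using lower by blast
      then show "(INF \<tau>\<in>{0..}. F \<tau>) \<le> V A" using cINF_lower[OF bddF, of \<tau>] by simp
    qed auto
  qed
  have ineq: "1 / 4 * (INF \<tau>\<in>{0..}. G \<tau>) \<le> (INF \<tau>\<in>{0..}. F \<tau>)"
  proof (rule cINF_greatest)
    fix \<tau> :: real assume t: "\<tau> \<in> {0..}"
    then have tau_nn: "\<tau> \<ge> 0" by simp
    have t2: "\<tau>\<^sup>2 \<le> 4 * \<tau>\<^sup>2" by simp
    have sub: "K (2 * \<tau>) \<subseteq> K \<tau>" unfolding K_def
      by (clarsimp simp: power_mult_distrib) (use t2 in linarith)
    have tm: "\<sigma>\<^sup>2 * r i / (real n * lam i) \<le> 4 * ((1 - \<tau> * sqrt (m i / r i))\<^sup>2 * (\<sigma>\<^sup>2 * r i / (real n * lam i)))"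
      if iK: "i \<in> K (2 * \<tau>)" for i
    proof -
      have gt: "r i / m i > 4 * \<tau>\<^sup>2" using iK by (simp add: K_def power_mult_distrib)
      then have "0 < r i / m i" using le_less_trans[OF _ gt] by simp
      then have rpos: "r i > 0" using m_pos[of i] by (simp add: zero_less_divide_iff)
      define q where "q = \<tau> * sqrt (m i / r i)"
      have q_nn: "q \<ge> 0" using tau_nn rpos m_pos[of i] by (simp add: q_def)
      have q2: "q\<^sup>2 = \<tau>\<^sup>2 / (r i / m i)"
        using rpos m_pos[of i] by (simp add: q_def power_mult_distrib)
      have "q\<^sup>2 < 1 / 4" unfolding q2 using gt rpos m_pos[of i] by (simp add: divide_less_eq field_simps)
      then have "q\<^sup>2 < (1/2)\<^sup>2" by (simp add: power2_eq_square)
      then have "q < 1 / 2" using power_less_imp_less_base[of q 2 "1/2"] by simp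
      then have "(1/2)\<^sup>2 \<le> (1 - q)\<^sup>2" by (intro power_mono) auto
      then have "1 \<le> 4 * (1 - q)\<^sup>2" by (simp add: power2_eq_square)
      moreover have "\<sigma>\<^sup>2 * r i / (real n * lam i) \<ge> 0"
        using rpos lam_pos[of i] by simp
      ultimately have "1 * (\<sigma>\<^sup>2 * r i / (real n * lam i)) \<le> 4 * (1 - q)\<^sup>2 * (\<sigma>\<^sup>2 * r i / (real n * lam i))"
        by (rule mult_right_mono)
      then show ?thesis unfolding q_def[symmetric] by (simp add: mult.assoc)
    qed
    have "G (2 * \<tau>) \<le> 4 * F \<tau>"
    proof -
      have "(\<Sum>i\<in>K (2 * \<tau>). \<sigma>\<^sup>2 * r i / (real n * lam i))
          \<le> (\<Sum>i\<in>K (2 * \<tau>). 4 * ((1 - \<tau> * sqrt (m i / r i))\<^sup>2 * (\<sigma>\<^sup>2 * r i / (real n * lam i))))"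
        using tm by (rule sum_mono)
      also have "\<dots> \<le> (\<Sum>i\<in>K \<tau>. 4 * ((1 - \<tau> * sqrt (m i / r i))\<^sup>2 * (\<sigma>\<^sup>2 * r i / (real n * lam i))))"
        using sub cm_nn unfolding coef
        by (intro sum_mono2) (auto simp: c_nn rho_nn mu_nn intro!: mult_nonneg_nonneg)
      also have "\<dots> = 4 * (\<Sum>i\<in>K \<tau>. (1 - \<tau> * sqrt (m i / r i))\<^sup>2 * (\<sigma>\<^sup>2 * r i / (real n * lam i)))"
        by (rule sum_distrib_left[symmetric])
      finally have S: "(\<Sum>i\<in>K (2 * \<tau>). \<sigma>\<^sup>2 * r i / (real n * lam i))
          \<le> 4 * (\<Sum>i\<in>K \<tau>. (1 - \<tau> * sqrt (m i / r i))\<^sup>2 * (\<sigma>\<^sup>2 * r i / (real n * lam i)))" .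
      have P: "(2 * \<tau>)\<^sup>2 / pi\<^sup>2 = 4 * (\<tau>\<^sup>2 / pi\<^sup>2)" by (simp add: power_mult_distrib)
      have "4 * (\<tau>\<^sup>2 / pi\<^sup>2) + (\<Sum>i\<in>K (2 * \<tau>). \<sigma>\<^sup>2 * r i / (real n * lam i))
          \<le> 4 * (\<tau>\<^sup>2 / pi\<^sup>2) + 4 * (\<Sum>i\<in>K \<tau>. (1 - \<tau> * sqrt (m i / r i))\<^sup>2 * (\<sigma>\<^sup>2 * r i / (real n * lam i)))"
        by (rule add_left_mono[OF S])
      then show ?thesis unfolding F_def G_def P by (simp only: distrib_left)
    qed
    moreover have "(INF \<tau>\<in>{0..}. G \<tau>) \<le> G (2 * \<tau>)"
      using tau_nn by (intro cINF_lower[OF bddG]) auto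
    ultimately show "1 / 4 * (INF \<tau>\<in>{0..}. G \<tau>) \<le> F \<tau>" by simp
  qed auto
  show ?thesis
    unfolding R'eq Sinv using eq1 ineq unfolding V_def F_def G_def by simp
qed

end
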